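(* Let $q$ be a prime power, let $n>1$ and $k\ge 1$ with $\gcd(n,k)=1$, and let $f(x)$ be an irreducible polynomial of degree $n$ over $\mathbb{F}_q$. Let $\alpha,\beta\in\mathbb{F}_{q^k}$ with $\alpha\neq 0$, and write $g(x)=f(\alpha x+\beta)=\sum_{i=0}^{n} g_i x^i$. Then $\mathbb{F}_q(g_0,g_1,\ldots,g_n)=\mathbb{F}_{q^k}$ if and only if $\mathbb{F}_q(\alpha,\beta)=\mathbb{F}_{q^k}$.
   Context: For elements $a_1,\dots,a_r$ of a finite extension of $\mathbb{F}_q$, $\mathbb{F}_q(a_1,\ldots,a_r)$ denotes the smallest field containing $\mathbb{F}_q$ and all $a_i$; equivalently, $\mathbb{F}_q(a_1,\dots,a_r)=\mathbb{F}_{q^k}$ (with all $a_i\in\mathbb{F}_{q^k}$) means that for every proper divisor $v$ of $k$ some $a_i\notin\mathbb{F}_{q^v}$. *)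

theory Defs
  imports "HOL-Computational_Algebra.Polynomial" "HOL-Computational_Algebra.Primes" "HOL-Library.Cardinality"
begin

text \<open>Inside an ambient finite field of order q^k, the subfield of order q^v
  (v a divisor of k) is the set of elements fixed by the q^v-th power map.\<close>
definition Fqv :: "nat \<Rightarrow> nat \<Rightarrow> 'a::field set" where
  "Fqv q v = {x. x ^ (q ^ v) = x}"

text \<open>F_q(S) = F_{q^k}: all elements lie in F_{q^k}, and for every proper divisor
  v of k some element lies outside F_{q^v}.\<close>
definition generates :: "nat \<Rightarrow> nat \<Rightarrow> 'a::field set \<Rightarrow> bool" where
  "generates q k S \<longleftrightarrow> S \<subseteq> Fqv q k \<and> (\<forall>v. v dvd k \<and> v \<noteq> k \<longrightarrow> \<not> S \<subseteq> Fqv q v)"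

end

theory Submission
  imports Defs "HOL-Algebra.Algebraic_Closure_Type" "HOL-Number_Theory.Residues"
begin

hide_const (open) Divisibility.prime Divisibility.irreducible UnivPoly.up_ring.coeff UnivPoly.monom Polynomials.lead_coeff Polynomials.degree





definition rhom :: "('x::comm_ring_1 \<Rightarrow> 'y::comm_ring_1) \<Rightarrow> bool" where
  "rhom h \<longleftrightarrow> h 0 = 0 \<and> h 1 = 1 \<and> (\<forall>x y. h (x+y) = h x + h y) \<and> (\<forall>x y. h (x*y) = h x * h y)"

lemma rhomD: assumes "rhom h"
  shows "h 0 = 0" "h 1 = 1" "h (x+y) = h x + h y" "h (x*y) = h x * h y"
  using assms unfolding rhom_def by auto

lemma rhom_minus: assumes "rhom h" shows "h (-x) = - h x"
proof -
  have "h x + h (-x) = 0" using rhomD(3)[OF assms, of x "-x"] by (simp add: rhomD[OF assms])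
  thus ?thesis by (simp add: eq_neg_iff_add_eq_0 add.commute)
qed

lemma rhom_diff: assumes "rhom h" shows "h (x - y) = h x - h y"
  using rhom_minus[OF assms, of y] rhomD(3)[OF assms, of x "-y"] by simp

lemma rhom_sum: assumes "rhom h" shows "h (sum f A) = (\<Sum>i\<in>A. h (f i))"
  by (induction A rule: infinite_finite_induct) (auto simp: rhomD[OF assms])

lemma rhom_prod: assumes "rhom h" shows "h (prod f A) = (\<Prod>i\<in>A. h (f i))"
  by (induction A rule: infinite_finite_induct) (auto simp: rhomD[OF assms])

lemma rhom_power: assumes "rhom h" shows "h (x ^ n) = h x ^ n"
  by (induction n) (auto simp: rhomD[OF assms])

lemma rhom_of_nat: assumes "rhom h" shows "h (of_nat n) = of_nat n"
  by (induction n) (auto simp: rhomD[OF assms])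

lemma rhom_comp: assumes "rhom h" "rhom g" shows "rhom (\<lambda>x. g (h x))"
  using assms unfolding rhom_def by auto

lemma rhom_divide: fixes h :: "'x::field \<Rightarrow> 'y::field"
  assumes "rhom h" shows "h (x / y) = h x / h y"
proof (cases "y = 0")
  case True thus ?thesis by (simp add: rhomD[OF assms])
next
  case False
  have "h y * h (inverse y) = 1" using rhomD(4)[OF assms, of y "inverse y"] False
    by (simp add: rhomD[OF assms])
  hence "h (inverse y) = inverse (h y)" by (metis inverse_unique)
  thus ?thesis by (simp add: divide_inverse rhomD[OF assms])
qed

lemma rhom_inj0: fixes h :: "'x::field \<Rightarrow> 'y::field"
  assumes "rhom h" shows "h x = 0 \<longleftrightarrow> x = 0"
proof
  assume "h x = 0"
  show "x = 0"
  proof (rule ccontr)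
    assume "x \<noteq> 0"
    hence "h x * h (inverse x) = 1" using rhomD(4)[OF assms, of x "inverse x"]
      by (simp add: rhomD[OF assms])
    with \<open>h x = 0\<close> show False by simp
  qed
qed (simp add: rhomD[OF assms])

lemma rhom_inj: fixes h :: "'x::field \<Rightarrow> 'y::field"
  assumes "rhom h" shows "inj h"
proof (rule injI)
  fix x y assume "h x = h y"
  hence "h (x - y) = 0" by (simp add: rhom_diff[OF assms])
  thus "x = y" using rhom_inj0[OF assms] by simp
qed

lemma map_poly_rhom_add: assumes "rhom h"
  shows "map_poly h (p + q) = map_poly h p + map_poly h q"
  by (intro poly_eqI) (simp add: coeff_map_poly rhomD[OF assms])

lemma map_poly_rhom_mult: assumes "rhom h"
  shows "map_poly h (p * q) = map_poly h p * map_poly h q"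
  by (intro poly_eqI) (simp add: coeff_map_poly rhomD[OF assms] coeff_mult rhom_sum[OF assms])

lemma map_poly_rhom_diff: assumes "rhom h"
  shows "map_poly h (p - q) = map_poly h p - map_poly h q"
  by (intro poly_eqI) (simp add: coeff_map_poly rhomD[OF assms] rhom_diff[OF assms])

lemma map_poly_rhom_const: assumes "rhom h"
  shows "map_poly h [:c:] = [:h c:]"
  by (simp add: map_poly_pCons rhomD[OF assms])

lemma map_poly_rhom_pcompose: assumes "rhom h"
  shows "map_poly h (pcompose p r) = pcompose (map_poly h p) (map_poly h r)"
proof (induction p)
  case 0 thus ?case by simp
next
  case (pCons a p)
  thus ?case
    by (simp add: pcompose_pCons map_poly_pCons rhomD[OF assms] map_poly_rhom_add[OF assms]
        map_poly_rhom_mult[OF assms] map_poly_rhom_const[OF assms])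
qed

lemma map_poly_rhom_prod: assumes "rhom h"
  shows "map_poly h (prod f A) = (\<Prod>i\<in>A. map_poly h (f i))"
  by (induction A rule: infinite_finite_induct)
     (auto simp: rhomD[OF assms] map_poly_rhom_mult[OF assms])

lemma poly_map_poly_rhom: assumes "rhom h"
  shows "poly (map_poly h p) (h x) = h (poly p x)"
  by (induction p) (auto simp: map_poly_pCons rhomD[OF assms])

lemma frob_rhom:
  assumes "prime CHAR('x::comm_ring_1)" "N = CHAR('x) ^ t"
  shows "rhom (\<lambda>x::'x. x ^ N)"
proof -
  have "N > 0" using assms prime_gt_0_nat by auto
  have "(x + y) ^ N = x ^ N + y ^ N" for x y :: 'x
    by (rule freshmans_dream'[OF assms])
  thus ?thesis unfolding rhom_def
    using \<open>N > 0\<close> by (simp add: power_mult_distrib zero_power)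
qed

lemma frob_inj:
  assumes "prime CHAR('x::field)" "N = CHAR('x) ^ t" "(x::'x) ^ N = y ^ N"
  shows "x = y"
proof -
  have "(x - y) ^ N = 0" using rhom_diff[OF frob_rhom[OF assms(1,2)]] assms(3) by simp
  thus ?thesis by simp
qed

lemma poly_frob:
  assumes "prime CHAR('x::comm_ring_1)" "N = CHAR('x) ^ t" "\<And>i. coeff P i ^ N = coeff P i"
  shows "poly P ((x::'x) ^ N) = poly P x ^ N"
proof -
  have h: "rhom (\<lambda>x::'x. x ^ N)" by (rule frob_rhom[OF assms(1,2)])
  have "map_poly (\<lambda>x. x ^ N) P = P"
    by (intro poly_eqI) (simp add: coeff_map_poly rhomD[OF h] assms(3))
  thus ?thesis using poly_map_poly_rhom[OF h, of P x] by simp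
qed

lemma ff_card_pow:
  fixes x :: "'x :: {field,finite}"
  shows "x ^ CARD('x) = x"
proof (cases "x = 0")
  case False
  have "x * (\<Prod>y\<in>UNIV-{0}. x * y) = x * x ^ (card (UNIV :: 'x set) - 1) * \<Prod>(UNIV-{0})"
    by (simp add: prod.distrib mult_ac)
  also have "x * x ^ (card (UNIV :: 'x set) - 1) = x ^ Suc (card (UNIV :: 'x set) - 1)"
    by (subst power_Suc) auto
  also have "Suc (card (UNIV :: 'x set) - 1) = card (UNIV :: 'x set)"
    using finite_UNIV_card_ge_0[where ?'a = 'x] by simp
  also have "(\<Prod>y\<in>UNIV-{0}. x * y) = (\<Prod>y\<in>UNIV-{0}. y)"
    by (rule prod.reindex_bij_witness[of _ "\<lambda>y. y / x" "\<lambda>y. x * y"]) (use False in auto)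
  finally show ?thesis
    by simp
qed (use finite_UNIV_card_ge_0[where ?'a = 'x] in auto)

lemma ff_card_pow_pow:
  fixes x :: "'x :: {field,finite}"
  shows "x ^ (CARD('x) ^ t) = x"
  by (induction t) (simp_all add: ff_card_pow power_mult flip: power_Suc2)

lemma pow_pow_add: "(x::'x::monoid_mult) ^ (q ^ (a + b)) = (x ^ (q ^ a)) ^ (q ^ b)"
  by (simp add: power_add power_mult)

lemma pow_fix_mult: assumes "(x::'x::monoid_mult) ^ (q ^ a) = x" shows "x ^ (q ^ (a * t)) = x"
proof (induction t)
  case (Suc t)
  have "x ^ (q ^ (a * Suc t)) = (x ^ (q ^ a)) ^ (q ^ (a * t))"
    by (metis mult_Suc_right pow_pow_add)
  thus ?case using Suc assms by simp
qed simp

lemma pow_fix_dvd: assumes "(x::'x::monoid_mult) ^ (q ^ a) = x" "a dvd b" shows "x ^ (q ^ b) = x"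
  using pow_fix_mult[OF assms(1)] assms(2) by (auto elim!: dvdE)



lemma frob_pow_cancel:
  fixes r :: "'x::field"
  assumes pr: "prime CHAR('x)" and q: "q = CHAR('x) ^ e"
    and eq: "r ^ (q ^ (a + b)) = r ^ (q ^ b)"
  shows "r ^ (q ^ a) = r"
proof -
  have 1: "(r ^ (q ^ a)) ^ (q ^ b) = r ^ (q ^ b)" using eq by (simp add: pow_pow_add)
  have 2: "q ^ b = CHAR('x) ^ (e * b)" by (simp add: q power_mult)
  show ?thesis by (rule frob_inj[OF pr 2 1])
qed

lemma period:
  fixes r :: "'x::field"
  assumes pr: "prime CHAR('x)" and q: "q = CHAR('x) ^ e"
    and fin: "finite (range (\<lambda>i. r ^ (q ^ i)))"
  shows "\<exists>d>0. (\<forall>m. r ^ (q ^ m) = r \<longleftrightarrow> d dvd m) \<and> card (range (\<lambda>i. r ^ (q ^ i))) = d"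
proof -
  let ?T = "\<lambda>i. r ^ (q ^ i)"
  have "\<not> inj ?T"
  proof
    assume "inj ?T"
    hence "finite (UNIV :: nat set)" using fin finite_imageD by blast
    thus False by simp
  qed
  then obtain i j where ij: "i \<noteq> j" "?T i = ?T j" unfolding inj_def by blast
  have "\<exists>m>0. ?T m = r"
  proof (cases "i < j")
    case True
    hence "r ^ (q ^ ((j - i) + i)) = r ^ (q ^ i)" using ij by simp
    hence "?T (j - i) = r" by (rule frob_pow_cancel[OF pr q])
    thus ?thesis using True by (intro exI[of _ "j - i"]) simp
  next
    case False
    hence "j < i" using ij by simp
    hence "r ^ (q ^ ((i - j) + j)) = r ^ (q ^ j)" using ij by simp
    hence "?T (i - j) = r" by (rule frob_pow_cancel[OF pr q])
    thus ?thesis using \<open>j < i\<close> by (intro exI[of _ "i - j"]) simp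
  qed
  define d where "d = (LEAST m. 0 < m \<and> ?T m = r)"
  have d: "0 < d" "?T d = r" using LeastI_ex[OF \<open>\<exists>m>0. ?T m = r\<close>] unfolding d_def by auto
  have dmin: "\<And>m. 0 < m \<Longrightarrow> ?T m = r \<Longrightarrow> d \<le> m" unfolding d_def by (rule Least_le) simp
  have red: "?T m = ?T (m mod d)" for m
  proof -
    have "?T (d * (m div d)) = r" using pow_fix_mult[OF d(2)] by simp
    hence "?T (d * (m div d) + m mod d) = ?T (m mod d)" by (simp only: pow_pow_add)
    thus ?thesis by (simp only: mult_div_mod_eq)
  qed
  have dvd: "?T m = r \<longleftrightarrow> d dvd m" for m
  proof
    assume "?T m = r"
    hence "?T (m mod d) = r" using red by simp
    show "d dvd m"
    proof (rule ccontr)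
      assume "\<not> d dvd m"
      hence "0 < m mod d" by (simp add: mod_greater_zero_iff_not_dvd)
      hence "d \<le> m mod d" using dmin \<open>?T (m mod d) = r\<close> by blast
      thus False using mod_less_divisor[OF d(1), of m] by simp
    qed
  next
    assume "d dvd m" thus "?T m = r" using pow_fix_dvd[OF d(2)] by blast
  qed
  have rng: "range ?T = ?T ` {..<d}"
  proof
    show "range ?T \<subseteq> ?T ` {..<d}"
    proof
      fix x assume "x \<in> range ?T"
      then obtain m where "x = ?T m" by auto
      hence "x = ?T (m mod d)" using red by simp
      thus "x \<in> ?T ` {..<d}" using d(1) by auto
    qed
  qed auto
  have "inj_on ?T {..<d}"
  proof (rule inj_onI)
    fix i j assume ij: "i \<in> {..<d}" "j \<in> {..<d}" "?T i = ?T j"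
    show "i = j"
    proof (rule ccontr)
      assume "i \<noteq> j"
      then consider "i < j" | "j < i" by linarith
      thus False
      proof cases
        case 1
        hence "r ^ (q ^ ((j - i) + i)) = r ^ (q ^ i)" using ij by simp
        hence "?T (j - i) = r" by (rule frob_pow_cancel[OF pr q])
        hence "d dvd (j - i)" using dvd[of "j - i"] by simp
        moreover have "0 < j - i" "j - i < d" using 1 ij by auto
        ultimately show False using nat_dvd_not_less by simp
      next
        case 2
        hence "r ^ (q ^ ((i - j) + j)) = r ^ (q ^ j)" using ij by simp
        hence "?T (i - j) = r" by (rule frob_pow_cancel[OF pr q])
        hence "d dvd (i - j)" using dvd[of "i - j"] by simp
        moreover have "0 < i - j" "i - j < d" using 2 ij by auto
        ultimately show False using nat_dvd_not_less by simp
      qed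
    qed
  qed
  hence "card (range ?T) = d" using rng card_image by fastforce
  thus ?thesis using d(1) dvd by blast
qed



lemma fixed_in_range:
  fixes \<psi> :: "'b::{field,finite} \<Rightarrow> 'c::field"
  assumes h: "rhom \<psi>" and x: "x ^ CARD('b) = x"
  shows "x \<in> range \<psi>"
proof -
  let ?q = "CARD('b)"
  have "card {0::'b, 1} \<le> ?q" by (rule card_mono) auto
  hence q2: "?q \<ge> 2" by simp
  define P :: "'c poly" where "P = monom 1 ?q - monom 1 1"
  have polyP: "poly P y = y ^ ?q - y" for y by (simp add: P_def poly_monom)
  have "coeff P ?q = 1" using q2 by (simp add: P_def coeff_monom)
  hence P0: "P \<noteq> 0" by auto
  have degP: "degree P \<le> ?q" unfolding P_def
    by (rule order.trans[OF degree_diff_le_max]) (use q2 in \<open>auto simp: degree_monom_le degree_monom_eq\<close>)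
  let ?A = "{y. poly P y = 0}"
  have fin: "finite ?A" by (rule poly_roots_finite[OF P0])
  have cardA: "card ?A \<le> ?q" using card_poly_roots_bound[OF P0] degP by linarith
  have sub: "range \<psi> \<subseteq> ?A"
  proof
    fix y assume "y \<in> range \<psi>"
    then obtain b where "y = \<psi> b" by auto
    moreover have "\<psi> b ^ ?q = \<psi> b" using rhom_power[OF h, of b ?q] ff_card_pow[of b] by simp
    ultimately show "y \<in> ?A" by (simp add: polyP)
  qed
  have "card (range \<psi>) = ?q" using card_image[OF rhom_inj[OF h]] by simp
  hence "range \<psi> = ?A" using card_seteq[OF fin sub] cardA by simp
  moreover have "x \<in> ?A" using x by (simp add: polyP)
  ultimately show ?thesis by simp
qed

lemma irr_min_degree:
  fixes f :: "'b::field poly" and ev :: "'b poly \<Rightarrow> 'c::field"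
  assumes irr: "irreducible f" and evf: "ev f = 0"
   and ev_add: "\<And>P Q. ev (P + Q) = ev P + ev Q" and ev_mult: "\<And>P Q. ev (P * Q) = ev P * ev Q"
   and ev_const: "\<And>c. c \<noteq> 0 \<Longrightarrow> ev [:c:] \<noteq> 0"
   and P: "ev P = 0" "P \<noteq> 0"
  shows "degree f \<le> degree P"
  using P
proof (induction "degree P" arbitrary: P rule: less_induct)
  case less
  have f0: "f \<noteq> 0" using irr by auto
  show ?case
  proof (rule ccontr)
    assume lt: "\<not> degree f \<le> degree P"
    have dm: "f = P * (f div P) + f mod P" by simp
    have evm: "ev (f mod P) = 0"
      using evf less.prems(1) ev_add[of "P * (f div P)" "f mod P"] ev_mult[of P "f div P"] dm by simp
    show False
    proof (cases "f mod P = 0")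
      case True
      hence fP: "f = P * (f div P)" using dm by simp
      hence d0: "f div P \<noteq> 0" using f0 by auto
      from Factorial_Ring.irreducibleD[OF irr fP] show False
      proof
        assume "is_unit P"
        hence "degree P = 0" using less.prems(2) is_unit_iff_degree by blast
        hence "P = [:coeff P 0:]" by (rule degree_0_id[symmetric])
        moreover have "coeff P 0 \<noteq> 0" using less.prems(2) \<open>P = [:coeff P 0:]\<close> by (metis pCons_0_0)
        ultimately show False using ev_const less.prems(1) by metis
      next
        assume "is_unit (f div P)"
        hence "degree (f div P) = 0" using d0 is_unit_iff_degree by blast
        hence "degree f = degree P" using fP degree_mult_eq[OF less.prems(2) d0] by simp
        thus False using lt by simp
      qed
    next
      case False
      have "degree (f mod P) < degree P" using degree_mod_less[OF less.prems(2), of f] False by simp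
      hence "degree f \<le> degree (f mod P)" using less.hyps[OF _ evm False] by blast
      thus False using lt \<open>degree (f mod P) < degree P\<close> by simp
    qed
  qed
qed



lemma root_period:
  fixes \<psi> :: "'b::{field,finite} \<Rightarrow> 'c::field" and f :: "'b poly"
  assumes h: "rhom \<psi>" and pr: "prime CHAR('c)" and q: "CARD('b) = CHAR('c) ^ e"
    and irr: "irreducible f" and deg: "degree f = n"
    and r: "poly (map_poly \<psi> f) r = 0"
  shows "r ^ (CARD('b) ^ m) = r \<longleftrightarrow> n dvd m"
proof -
  let ?q = "CARD('b)"
  define F where "F = map_poly \<psi> f"
  have f0: "f \<noteq> 0" using irr by auto
  have h0: "\<psi> 0 = 0" by (rule rhomD[OF h])
  have degF: "degree F = n" unfolding F_def using deg rhom_inj0[OF h] by (simp add: degree_map_poly)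
  have F0: "F \<noteq> 0" unfolding F_def using f0 rhom_inj0[OF h] by (simp add: map_poly_eq_0_iff)
  have frobN: "?q ^ t = CHAR('c) ^ (e * t)" for t by (simp add: q power_mult)
  have coeffF: "coeff F i ^ (?q ^ t) = coeff F i" for i t
    unfolding F_def by (simp add: coeff_map_poly h0 flip: rhom_power[OF h] add: ff_card_pow_pow)
  have rootcl: "poly F (x ^ (?q ^ t)) = 0" if "poly F x = 0" for x t
    using poly_frob[OF pr frobN coeffF] that by (simp add: zero_power)
  let ?R = "{x. poly F x = 0}"
  have finR: "finite ?R" by (rule poly_roots_finite[OF F0])
  have cardR: "card ?R \<le> n" using card_poly_roots_bound[OF F0] degF by simp
  define Orb where "Orb = range (\<lambda>i. r ^ (?q ^ i))"
  have OR: "Orb \<subseteq> ?R" unfolding Orb_def using rootcl r F_def by auto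
  have finOrb: "finite Orb" using finite_subset[OF OR finR] .
  obtain d where d: "d > 0" "\<And>m. r ^ (?q ^ m) = r \<longleftrightarrow> d dvd m" "card Orb = d"
    using period[OF pr q finOrb[unfolded Orb_def]] unfolding Orb_def by blast
  have "d \<le> n" using card_mono[OF finR OR] cardR d(3) by simp
  have rOrb: "r \<in> Orb" unfolding Orb_def by (metis power_0 power_one_right rangeI)
  define H where "H = (\<Prod>x\<in>Orb. [:-x, 1:])"
  have fr: "rhom (\<lambda>x::'c. x ^ ?q)" by (rule frob_rhom[OF pr q])
  have injfr: "inj (\<lambda>x::'c. x ^ ?q)" by (rule rhom_inj[OF fr])
  have imgOrb: "(\<lambda>x. x ^ ?q) ` Orb = Orb"
  proof
    show "(\<lambda>x. x ^ ?q) ` Orb \<subseteq> Orb"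
    proof
      fix y assume "y \<in> (\<lambda>x. x ^ ?q) ` Orb"
      then obtain i where "y = (r ^ (?q ^ i)) ^ ?q" unfolding Orb_def by auto
      hence "y = r ^ (?q ^ Suc i)" by (simp add: power_mult[symmetric] mult.commute)
      thus "y \<in> Orb" unfolding Orb_def by (rule range_eqI)
    qed
    show "Orb \<subseteq> (\<lambda>x. x ^ ?q) ` Orb"
    proof
      fix x assume "x \<in> Orb"
      then obtain i where x: "x = r ^ (?q ^ i)" unfolding Orb_def by auto
      have x1: "x = r ^ (?q ^ (i + d))" using x d(2)[of d] pow_pow_add[of r ?q d i]
        by (simp add: add.commute)
      obtain j where j: "i + d = Suc j" using d(1) by (metis add_gr_0 gr0_conv_Suc)
      have "r ^ (?q ^ (i + d)) = (r ^ (?q ^ j)) ^ ?q" unfolding j by (simp only: power_Suc2 power_mult)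
      hence "x = (r ^ (?q ^ j)) ^ ?q" using x1 by simp
      moreover have "r ^ (?q ^ j) \<in> Orb" unfolding Orb_def by (rule rangeI)
      ultimately show "x \<in> (\<lambda>x. x ^ ?q) ` Orb" by (rule image_eqI)
    qed
  qed
  have "map_poly (\<lambda>x. x ^ ?q) H = (\<Prod>x\<in>Orb. [:-(x ^ ?q), 1:])"
    unfolding H_def map_poly_rhom_prod[OF fr]
    by (intro prod.cong refl) (simp add: map_poly_pCons rhomD[OF fr] rhom_minus[OF fr])
  also have "\<dots> = (\<Prod>y\<in>(\<lambda>x. x ^ ?q) ` Orb. [:-y, 1:])"
    using prod.reindex[OF inj_on_subset[OF injfr subset_UNIV], of "\<lambda>y. [:-y, 1:]" Orb]
    by (simp add: comp_def)
  also have "\<dots> = H" unfolding imgOrb H_def ..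
  finally have Hfix: "map_poly (\<lambda>x. x ^ ?q) H = H" .
  have coeffH: "coeff H i \<in> range \<psi>" for i
  proof (rule fixed_in_range[OF h])
    have "coeff (map_poly (\<lambda>x. x ^ ?q) H) i = coeff H i ^ ?q"
      by (simp add: coeff_map_poly zero_power)
    thus "coeff H i ^ ?q = coeff H i" using Hfix by simp
  qed
  define H0 where "H0 = map_poly (inv_into UNIV \<psi>) H"
  have inv0: "inv_into UNIV \<psi> 0 = 0" using h0 rhom_inj[OF h] by (metis inv_f_f)
  have H0H: "map_poly \<psi> H0 = H" unfolding H0_def
    by (intro poly_eqI) (simp add: coeff_map_poly h0 inv0 f_inv_into_f[OF coeffH])
  define ev where "ev P = poly (map_poly \<psi> P) r" for P
  have ev_add: "ev (P + Q) = ev P + ev Q" for P Q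
    unfolding ev_def by (simp add: map_poly_rhom_add[OF h])
  have ev_mult: "ev (P * Q) = ev P * ev Q" for P Q
    unfolding ev_def by (simp add: map_poly_rhom_mult[OF h])
  have ev_const: "ev [:c:] \<noteq> 0" if "c \<noteq> 0" for c
    unfolding ev_def using that rhom_inj0[OF h] by (simp add: map_poly_rhom_const[OF h])
  have evf: "ev f = 0" unfolding ev_def using r .
  have evH0: "ev H0 = 0" unfolding ev_def H0H H_def poly_prod
    using finOrb rOrb by (auto intro: prod_zero)
  have H_nz: "H \<noteq> 0" unfolding H_def using finOrb by (auto simp: prod_zero_iff)
  have H0_nz: "H0 \<noteq> 0" using H_nz H0H by auto
  have degH: "degree H = d"
  proof -
    have "degree H = (\<Sum>x\<in>Orb. degree [:-x, 1:])" unfolding H_def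
      by (rule degree_prod_eq_sum_degree) auto
    also have "\<dots> = card Orb" by simp
    finally show ?thesis using d(3) by simp
  qed
  have "degree H0 = degree H" using H0H rhom_inj0[OF h] by (metis degree_map_poly)
  hence "n \<le> d" using irr_min_degree[OF irr evf ev_add ev_mult ev_const evH0 H0_nz] deg degH by simp
  hence "d = n" using \<open>d \<le> n\<close> by simp
  thus ?thesis using d(2) by simp
qed



lemma gcd_fix:
  fixes x :: "'x::monoid_mult"
  assumes "x ^ (q ^ A) = x" "x ^ (q ^ B) = x" "A * u = B * w + c"
  shows "x ^ (q ^ c) = x"
proof -
  have "x = x ^ (q ^ (A * u))" using pow_fix_mult[OF assms(1)] by simp
  also have "\<dots> = (x ^ (q ^ (B * w))) ^ (q ^ c)" using assms(3) pow_pow_add by metis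
  also have "\<dots> = x ^ (q ^ c)" using pow_fix_mult[OF assms(2)] by simp
  finally show ?thesis by simp
qed

lemma rhom_to_ac: "rhom (to_ac :: 'a::field \<Rightarrow> 'a alg_closure)"
  unfolding rhom_def by simp

lemma easy:
  fixes \<phi> :: "'b::{field,finite} \<Rightarrow> 'a::field"
  assumes h: "rhom \<phi>" and pr: "prime CHAR('a)" and qe: "CARD('b) = CHAR('a) ^ e"
   and fa: "\<alpha> ^ (CARD('b) ^ v) = \<alpha>" and fb: "\<beta> ^ (CARD('b) ^ v) = \<beta>"
  shows "coeff (pcompose (map_poly \<phi> f) [:\<beta>, \<alpha>:]) i ^ (CARD('b) ^ v)
         = coeff (pcompose (map_poly \<phi> f) [:\<beta>, \<alpha>:]) i"
proof -
  let ?N = "CARD('b) ^ v"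
  have Ne: "?N = CHAR('a) ^ (e * v)" by (simp add: qe power_mult)
  have fr: "rhom (\<lambda>x::'a. x ^ ?N)" by (rule frob_rhom[OF pr Ne])
  have h0: "\<phi> 0 = 0" by (rule rhomD[OF h])
  have m1: "map_poly (\<lambda>x. x ^ ?N) (map_poly \<phi> f) = map_poly \<phi> f"
    by (intro poly_eqI) (simp add: coeff_map_poly h0 rhomD[OF fr] flip: rhom_power[OF h] add: ff_card_pow_pow)
  have m2: "map_poly (\<lambda>x. x ^ ?N) [:\<beta>, \<alpha>:] = [:\<beta>, \<alpha>:]"
    by (simp add: map_poly_pCons rhomD[OF fr] fa fb)
  have "map_poly (\<lambda>x. x ^ ?N) (pcompose (map_poly \<phi> f) [:\<beta>, \<alpha>:]) = pcompose (map_poly \<phi> f) [:\<beta>, \<alpha>:]"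
    by (simp add: map_poly_rhom_pcompose[OF fr] m1 m2)
  hence "coeff (map_poly (\<lambda>x. x ^ ?N) (pcompose (map_poly \<phi> f) [:\<beta>, \<alpha>:])) i
        = coeff (pcompose (map_poly \<phi> f) [:\<beta>, \<alpha>:]) i" by simp
  thus ?thesis by (simp add: coeff_map_poly rhomD[OF fr])
qed

lemma hard:
  fixes \<phi> :: "'b::{field,finite} \<Rightarrow> 'a::{field,finite}" and f :: "'b poly" and \<alpha> \<beta> :: 'a
  assumes h: "rhom \<phi>" and pr: "prime CHAR('a)"
    and qe: "CARD('b) = CHAR('a) ^ e"
    and card_a: "CARD('a) = CARD('b) ^ k" and k: "k > 0"
    and n: "n > 1" and cop: "coprime n k"
    and irr: "irreducible f" and deg: "degree f = n" and alpha: "\<alpha> \<noteq> 0"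
    and v: "v dvd k"
    and fixg: "\<And>i. coeff (pcompose (map_poly \<phi> f) [:\<beta>, \<alpha>:]) i ^ (CARD('b) ^ v)
                 = coeff (pcompose (map_poly \<phi> f) [:\<beta>, \<alpha>:]) i"
  shows "\<alpha> ^ (CARD('b) ^ v) = \<alpha> \<and> \<beta> ^ (CARD('b) ^ v) = \<beta>"
proof -
  let ?q = "CARD('b)"
  define \<psi> where "\<psi> = (\<lambda>x. (to_ac (\<phi> x) :: 'a alg_closure))"
  have hpsi: "rhom \<psi>" unfolding \<psi>_def by (rule rhom_comp[OF h rhom_to_ac])
  have psi0: "\<psi> 0 = 0" by (rule rhomD[OF hpsi])
  have prC: "prime CHAR('a alg_closure)" using pr by simp
  have qC: "?q = CHAR('a alg_closure) ^ e" using qe by simp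
  have qCt: "?q ^ t = CHAR('a alg_closure) ^ (e * t)" for t by (simp add: qC power_mult)
  define F where "F = map_poly \<psi> f"
  have f0: "f \<noteq> 0" using irr by auto
  have degF: "degree F = n" unfolding F_def using deg rhom_inj0[OF hpsi] by (simp add: degree_map_poly)
  obtain r where r: "poly F r = 0" using alg_closed_imp_poly_has_root[of F] degF n by auto
  have per: "r ^ (?q ^ m) = r \<longleftrightarrow> n dvd m" for m
    by (rule root_period[OF hpsi prC qC irr deg r[unfolded F_def]])
  have coeffF: "coeff F i ^ (?q ^ t) = coeff F i" for i t
    unfolding F_def by (simp add: coeff_map_poly psi0 flip: rhom_power[OF hpsi] add: ff_card_pow_pow)
  have rootF: "poly F (r ^ (?q ^ t)) = 0" for t
    using poly_frob[OF prC qCt coeffF, of r] r by (simp add: zero_power)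
  define a where "a = (to_ac \<alpha> :: 'a alg_closure)"
  define b where "b = (to_ac \<beta> :: 'a alg_closure)"
  have a0: "a \<noteq> 0" unfolding a_def using alpha by simp
  have cardpow: "CARD('a) ^ t = ?q ^ (k * t)" for t by (simp add: card_a power_mult)
  have afix: "a ^ (?q ^ (k * t)) = a" for t
    unfolding a_def by (simp flip: to_ac_power cardpow add: ff_card_pow_pow)
  have bfix: "b ^ (?q ^ (k * t)) = b" for t
    unfolding b_def by (simp flip: to_ac_power cardpow add: ff_card_pow_pow)
  define G where "G = pcompose F [:b, a:]"
  have G_eq: "map_poly to_ac (pcompose (map_poly \<phi> f) [:\<beta>, \<alpha>:]) = G"
    unfolding G_def F_def \<psi>_def a_def b_def
    by (simp add: map_poly_rhom_pcompose[OF rhom_to_ac] map_poly_map_poly rhomD[OF h] o_def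
                  map_poly_pCons)
  have Gfix: "coeff G i ^ (?q ^ v) = coeff G i" for i
  proof -
    have "coeff G i = to_ac (coeff (pcompose (map_poly \<phi> f) [:\<beta>, \<alpha>:]) i)"
      unfolding G_eq[symmetric] by (simp add: coeff_map_poly)
    thus ?thesis using fixg[of i] by (metis to_ac_power)
  qed
  have degG: "degree G = n" unfolding G_def using degF a0 by (simp add: degree_pcompose)
  have G0: "G \<noteq> 0" using degG n by auto
  have polyG: "poly G x = poly F (b + x * a)" for x unfolding G_def by (simp add: poly_pcompose)
  let ?RG = "{x. poly G x = 0}"
  have finRG: "finite ?RG" by (rule poly_roots_finite[OF G0])
  have cardRG: "card ?RG \<le> n" using card_poly_roots_bound[OF G0] degG by simp
  define sj where "sj j = (r ^ (?q ^ (k * j)) - b) / a" for j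
  have sj_root: "sj j \<in> ?RG" for j using rootF[of "k * j"] a0 by (simp add: polyG sj_def)
  have sj_ne: "sj i \<noteq> sj j" if ij: "i < j" "j < n" for i j
  proof
    assume "sj i = sj j"
    hence "r ^ (?q ^ (k * i)) = r ^ (?q ^ (k * j))" using a0 by (simp add: sj_def divide_cancel_right)
    hence "r ^ (?q ^ (k * (j - i) + k * i)) = r ^ (?q ^ (k * i))" using ij
      by (simp add: diff_mult_distrib2)
    hence "r ^ (?q ^ (k * (j - i))) = r" by (rule frob_pow_cancel[OF prC qC])
    hence "n dvd k * (j - i)" using per by simp
    hence "n dvd (j - i)" using cop by (simp add: coprime_dvd_mult_right_iff)
    moreover have "0 < j - i" "j - i < n" using ij by auto
    ultimately show False using nat_dvd_not_less by simp
  qed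
  have inj_sj: "inj_on sj {..<n}"
  proof (rule inj_onI)
    fix i j assume "i \<in> {..<n}" "j \<in> {..<n}" "sj i = sj j"
    thus "i = j" using sj_ne[of i j] sj_ne[of j i] by (cases i j rule: linorder_cases) auto
  qed
  have RG: "?RG = sj ` {..<n}"
  proof (rule card_seteq[symmetric, OF finRG])
    show "sj ` {..<n} \<subseteq> ?RG" using sj_root by auto
    show "card ?RG \<le> card (sj ` {..<n})" using cardRG card_image[OF inj_sj] by simp
  qed
  define s where "s = sj 0"
  have s_def': "s = (r - b) / a" unfolding s_def sj_def by simp
  have sj_pow: "sj j = s ^ (?q ^ (k * j))" for j
  proof -
    have fr: "rhom (\<lambda>x::'a alg_closure. x ^ (?q ^ (k * j)))" by (rule frob_rhom[OF prC qCt])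
    show ?thesis unfolding s_def' sj_def
      by (simp add: rhom_divide[OF fr] rhom_diff[OF fr] afix bfix)
  qed
  have "s ^ (?q ^ v) \<in> ?RG"
    using poly_frob[OF prC qCt Gfix, of s] sj_root[of 0] unfolding s_def by (simp add: zero_power)
  then obtain j0 where j0: "j0 < n" "s ^ (?q ^ v) = s ^ (?q ^ (k * j0))"
    unfolding RG using sj_pow by auto
  have s_iter: "s ^ (?q ^ (v * m)) = s ^ (?q ^ (k * j0 * m))" for m
  proof (induction m)
    case (Suc m)
    have "s ^ (?q ^ (v * Suc m)) = (s ^ (?q ^ v)) ^ (?q ^ (v * m))"
      by (metis mult_Suc_right pow_pow_add)
    also have "\<dots> = (s ^ (?q ^ (k * j0))) ^ (?q ^ (v * m))" using j0 by simp
    also have "\<dots> = (s ^ (?q ^ (v * m))) ^ (?q ^ (k * j0))"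
      by (metis add.commute pow_pow_add)
    also have "\<dots> = (s ^ (?q ^ (k * j0 * m))) ^ (?q ^ (k * j0))" using Suc by simp
    also have "\<dots> = s ^ (?q ^ (k * j0 * Suc m))"
      by (metis mult_Suc_right pow_pow_add add.commute)
    finally show ?case .
  qed simp
  define N where "N = ?q ^ (v * n)"
  have NC: "N = CHAR('a alg_closure) ^ (e * (v * n))" unfolding N_def by (rule qCt)
  have frN: "rhom (\<lambda>x::'a alg_closure. x ^ N)" by (rule frob_rhom[OF prC NC])
  have sfix: "s ^ N = s"
  proof -
    have "s ^ N = s ^ (?q ^ (k * (j0 * n)))" unfolding N_def s_iter by (simp add: mult.assoc)
    also have "\<dots> = sj (j0 * n)" by (rule sj_pow[symmetric])
    also have "\<dots> = s" unfolding sj_def s_def'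
      using per[of "k * (j0 * n)"] by simp
    finally show ?thesis .
  qed
  have rfix: "r ^ N = r" unfolding N_def using per by simp
  define r1 where "r1 = r ^ (?q ^ k)"
  define s1 where "s1 = sj 1"
  have r1fix: "r1 ^ N = r1" unfolding r1_def N_def
    by (metis add.commute pow_pow_add rfix N_def)
  have s1s: "s1 = s ^ (?q ^ k)" unfolding s1_def using sj_pow[of 1] by simp
  have s1fix: "s1 ^ N = s1" unfolding s1s N_def
    by (metis add.commute pow_pow_add sfix N_def)
  have s1_def': "s1 = (r1 - b) / a" unfolding s1_def sj_def r1_def by simp
  have "r \<noteq> r1"
  proof
    assume "r = r1"
    hence "n dvd k" using per[of k] unfolding r1_def by simp
    hence "n dvd gcd n k" by simp
    hence "n dvd 1" using cop by simp
    thus False using n by simp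
  qed
  have as: "a * s = r - b" "a * s1 = r1 - b" using a0 unfolding s_def' s1_def' by simp_all
  have "s \<noteq> s1" using as \<open>r \<noteq> r1\<close> by auto
  have "a * (s - s1) = r - r1" using as by (simp add: right_diff_distrib)
  hence aeq: "a = (r - r1) / (s - s1)" using \<open>s \<noteq> s1\<close> by (simp add: eq_divide_eq)
  have aN: "a ^ N = a"
    unfolding aeq by (simp add: rhom_divide[OF frN] rhom_diff[OF frN] rfix r1fix sfix s1fix)
  have beq: "b = r - a * s" using as by simp
  have "(r - a * s) ^ N = r ^ N - a ^ N * s ^ N"
    using rhom_diff[OF frN, of r "a * s"] rhomD(4)[OF frN, of a s] by simp
  hence bN: "b ^ N = b" using beq rfix aN sfix by simp
  have alN: "\<alpha> ^ (?q ^ (n * v)) = \<alpha>"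
    using aN unfolding a_def N_def by (metis mult.commute to_ac_eq_iff to_ac_power)
  have beN: "\<beta> ^ (?q ^ (n * v)) = \<beta>"
    using bN unfolding b_def N_def by (metis mult.commute to_ac_eq_iff to_ac_power)
  have v0: "v > 0" using v k by (metis dvd_0_left_iff gr0I not_gr0)
  obtain k' where k': "k = v * k'" using v by (auto elim: dvdE)
  have "coprime n k'" using cop k' by simp
  hence gcdv: "gcd (n * v) k = v" unfolding k'
    by (metis gcd_mult_distrib_nat mult.commute coprime_iff_gcd_eq_1 mult.right_neutral)
  obtain u w where uw: "(n * v) * u = k * w + gcd (n * v) k"
    using bezout_nat[of "n * v" k] n v0 by auto
  have alk: "\<alpha> ^ (?q ^ k) = \<alpha>" using ff_card_pow[of \<alpha>] card_a by simp
  have bek: "\<beta> ^ (?q ^ k) = \<beta>" using ff_card_pow[of \<beta>] card_a by simp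
  show ?thesis
    using gcd_fix[OF alN alk uw[unfolded gcdv]] gcd_fix[OF beN bek uw[unfolded gcdv]] by simp
qed



theorem mainTheorem4:
  fixes \<phi> :: "'b::{field,finite} \<Rightarrow> 'a::{field,finite}"
    and f :: "'b poly" and q n k :: nat and \<alpha> \<beta> :: 'a
  assumes q: "q = CARD('b)"
    and qpow: "\<exists>p m. prime p \<and> m > 0 \<and> q = p ^ m"
    and card_a: "CARD('a) = q ^ k"
    and hom_add: "\<And>x y. \<phi> (x + y) = \<phi> x + \<phi> y"
    and hom_mult: "\<And>x y. \<phi> (x * y) = \<phi> x * \<phi> y"
    and hom_one: "\<phi> 1 = 1"
    and n: "n > 1" and k: "k \<ge> 1" and cop: "coprime n k"
    and irr: "irreducible f" and deg: "degree f = n"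
    and alpha: "\<alpha> \<noteq> 0"
  shows "generates q k {coeff (pcompose (map_poly \<phi> f) [:\<beta>, \<alpha>:]) i | i. i \<le> n}
         \<longleftrightarrow> generates q k {\<alpha>, \<beta>}"
proof -
  obtain p e where pe: "prime p" "e > 0" "q = p ^ e" using qpow by auto
  have phi0: "\<phi> 0 = 0" using hom_add[of 0 0] by (metis add.right_neutral add_left_cancel)
  have h: "rhom \<phi>" unfolding rhom_def using phi0 hom_one hom_add hom_mult by auto
  have charb: "CHAR('b) = p"
  proof -
    have "CHAR('b) dvd p ^ e" using CHAR_dvd_CARD[where ?'a='b] pe q by simp
    moreover have prb: "prime CHAR('b)" by (rule prime_CHAR_semidom[OF finite_imp_CHAR_pos]) simp
    ultimately have "CHAR('b) dvd p" using prime_dvd_power_iff pe(2) by blast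
    thus ?thesis using prb pe(1) primes_dvd_imp_eq by blast
  qed
  have chara: "CHAR('a) = p"
  proof (rule CHAR_eqI)
    show "of_nat p = (0::'a)" using rhom_of_nat[OF h, of p] charb phi0 by (metis of_nat_CHAR)
    fix x assume "of_nat x = (0::'a)"
    hence "\<phi> (of_nat x) = 0" using rhom_of_nat[OF h, of x] by simp
    hence "of_nat x = (0::'b)" using rhom_inj0[OF h] by simp
    thus "p dvd x" using charb by (simp add: of_nat_eq_0_iff_char_dvd)
  qed
  have pr: "prime CHAR('a)" using chara pe by simp
  have qe: "CARD('b) = CHAR('a) ^ e" using chara pe q by simp
  have card_a': "CARD('a) = CARD('b) ^ k" using card_a q by simp
  have k0: "k > 0" using k by simp
  define g where "g = pcompose (map_poly \<phi> f) [:\<beta>, \<alpha>:]"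
  have degg: "degree g \<le> n" unfolding g_def using deg rhom_inj0[OF h] alpha
    by (simp add: degree_pcompose degree_map_poly)
  have aq: "x ^ (q ^ k) = x" for x :: 'a using ff_card_pow[of x] card_a by simp
  have key: "({coeff g i | i. i \<le> n} \<subseteq> Fqv q v) \<longleftrightarrow> ({\<alpha>, \<beta>} \<subseteq> Fqv q v)" if v: "v dvd k" for v
  proof
    assume "{coeff g i | i. i \<le> n} \<subseteq> Fqv q v"
    hence c1: "coeff g i ^ (q ^ v) = coeff g i" if "i \<le> n" for i
      using that unfolding Fqv_def by auto
    have call: "coeff g i ^ (CARD('b) ^ v) = coeff g i" for i
    proof (cases "i \<le> n")
      case True thus ?thesis using c1 q by simp
    next
      case False
      hence "coeff g i = 0" using degg by (intro coeff_eq_0) simp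
      thus ?thesis by (simp add: zero_power)
    qed
    have "\<alpha> ^ (CARD('b) ^ v) = \<alpha> \<and> \<beta> ^ (CARD('b) ^ v) = \<beta>"
      by (rule hard[OF h pr qe card_a' k0 n cop irr deg alpha v call[unfolded g_def]])
    thus "{\<alpha>, \<beta>} \<subseteq> Fqv q v" unfolding Fqv_def using q by simp
  next
    assume "{\<alpha>, \<beta>} \<subseteq> Fqv q v"
    hence fa: "\<alpha> ^ (CARD('b) ^ v) = \<alpha>" and fb: "\<beta> ^ (CARD('b) ^ v) = \<beta>"
      unfolding Fqv_def using q by auto
    show "{coeff g i | i. i \<le> n} \<subseteq> Fqv q v"
      unfolding Fqv_def g_def using easy[OF h pr qe fa fb] q by auto
  qed
  have allk: "S \<subseteq> Fqv q k" for S :: "'a set" unfolding Fqv_def using aq by auto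
  show ?thesis unfolding generates_def g_def[symmetric] using key allk by blast
qed

end
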